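(* Let $z$ with $d(z,\mathcal{M})=O(\sigma)$, projection $z^*$, and $\Delta=\|z-z^*\|_2$. Choose Cartesian coordinates in which $z^*$ is the origin, $T_{z^*}\mathcal{M}$ is spanned by the first $d$ coordinate directions, and $z=(0,\dots,0,\Delta,0,\dots,0)$ with $\Delta$ in the $(d+1)$-th coordinate. Let $r_0=C\sigma$ and write $\mu_z^{\mathbb{B}}=\mathbb{E}_{Y\sim\nu}(Y\mid Y\in\mathcal{B}_D(z,r_0))=(\mu^{(1)},\dots,\mu^{(D)})$. If $|\Delta-\mu^{(d+1)}|\ge c_1\sigma$ and $|\mu^{(i)}|\le c_2\sigma^2\sqrt{\log(1/\sigma)}$ for all $i\ne d+1$, then $\sin\{\Theta(\mu_z^{\mathbb{B}}-z,\ z^*-z)\}\le C\sigma\sqrt{\log(1/\sigma)}$, where $\Theta(a,b)$ is the angle between vectors $a,b$.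
   Context: Model: $\mathcal{M}\subset\mathbb{R}^D$ is a compact, twice-differentiable, $d$-dimensional embedded submanifold with $d$-dimensional Hausdorff volume at most $V$ and reach at least $\tau>0$. $X$ is uniform on $\mathcal{M}$, $\xi\sim N(0,\sigma^2I_D)$ independent, and $Y=X+\xi$ has density $\nu$. $z^*=\arg\min_{x\in\mathcal{M}}\|x-z\|_2$. $\sigma$ is sufficiently small; $c_1,c_2,C$ are constants independent of $\sigma$. *)

theory Defs
  imports "HOL-Probability.Probability"
begin

definition vec_angle :: "'a::real_inner \<Rightarrow> 'a \<Rightarrow> real" where
  "vec_angle a b = arccos ((a \<bullet> b) / (norm a * norm b))"

text \<open>A twice-differentiable local parametrisation (chart) of M around p,
  with parameter space the euclidean space 'd (so d = DIM('d)).
  phi is an injective immersion of the open set U, a homeomorphism onto the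
  relatively open piece M \<inter> W, with a differentiable derivative phi'.\<close>
definition C2_chart ::
  "'a::euclidean_space set \<Rightarrow> 'd::euclidean_space set \<Rightarrow> 'a set \<Rightarrow> ('d \<Rightarrow> 'a)
     \<Rightarrow> ('d \<Rightarrow> ('d \<Rightarrow>\<^sub>L 'a)) \<Rightarrow> bool" where
  "C2_chart M U W \<phi> \<phi>' \<longleftrightarrow>
     open U \<and> open W \<and> \<phi> ` U = M \<inter> W \<and> inj_on \<phi> U \<and>
     continuous_on (M \<inter> W) (inv_into U \<phi>) \<and>
     (\<forall>u\<in>U. (\<phi> has_derivative blinfun_apply (\<phi>' u)) (at u)) \<and>
     \<phi>' differentiable_on U \<and>
     (\<forall>u\<in>U. inj (blinfun_apply (\<phi>' u)))"

definition C2_submanifold :: "'d::euclidean_space itself \<Rightarrow> 'a::euclidean_space set \<Rightarrow> bool" where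
  "C2_submanifold TYPE('d) M \<longleftrightarrow>
     (\<forall>p\<in>M. \<exists>(U::'d set) W \<phi> \<phi>'. C2_chart M U W \<phi> \<phi>' \<and> p \<in> W)"

definition is_tangent_space :: "'d::euclidean_space itself \<Rightarrow> 'a::euclidean_space set \<Rightarrow> 'a \<Rightarrow> 'a set \<Rightarrow> bool" where
  "is_tangent_space TYPE('d) M p S \<longleftrightarrow>
     (\<exists>(U::'d set) W \<phi> \<phi>' u. C2_chart M U W \<phi> \<phi>' \<and> u \<in> U \<and> \<phi> u = p \<and>
        S = range (blinfun_apply (\<phi>' u)))"

text \<open>reach(M) \<ge> tau: every point at distance < tau from M has a unique nearest point in M.\<close>
definition reach_ge :: "'a::euclidean_space set \<Rightarrow> real \<Rightarrow> bool" where
  "reach_ge M \<tau> \<longleftrightarrow>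
     (\<forall>x. infdist x M < \<tau> \<longrightarrow> (\<exists>!y. y \<in> M \<and> dist x y = infdist x M))"

definition gaussian_noise :: "real \<Rightarrow> 'a::euclidean_space measure" where
  "gaussian_noise \<sigma> = density lborel
     (\<lambda>y. ennreal ((2 * pi * \<sigma>\<^sup>2) powr (- real DIM('a) / 2) * exp (- (norm y)\<^sup>2 / (2 * \<sigma>\<^sup>2))))"

definition noisy_law :: "'a::euclidean_space measure \<Rightarrow> real \<Rightarrow> 'a measure" where
  "noisy_law PX \<sigma> = distr (PX \<Otimes>\<^sub>M gaussian_noise \<sigma>) borel (\<lambda>(x, \<xi>). x + \<xi>)"

definition cond_mean :: "'a::euclidean_space measure \<Rightarrow> 'a set \<Rightarrow> 'a" where
  "cond_mean \<nu> B = (1 / measure \<nu> B) *\<^sub>R (\<integral>y\<in>B. y \<partial>\<nu>)"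

end

theory Submission
  imports Defs
begin

lemma parseval_aux:
  fixes a :: "'a::euclidean_space"
  assumes n: "\<forall>b\<in>B. norm b = 1" and po: "pairwise orthogonal B" and c: "card B = DIM('a)"
  shows "(norm a)\<^sup>2 = (\<Sum>b\<in>B. (a \<bullet> b)\<^sup>2)"
proof -
  have fin: "finite B" using po pairwise_orthogonal_imp_finite by blast
  have "0 \<notin> B" using n by force
  hence ind: "independent B" using po pairwise_orthogonal_independent by blast
  have sp: "span B = UNIV"
    using card_eq_dim[of B UNIV] ind fin c by (auto simp add: dim_UNIV)
  define r where "r = a - (\<Sum>b\<in>B. (b \<bullet> a / (b \<bullet> b)) *\<^sub>R b)"
  have "orthogonal r r" unfolding r_def
    by (rule Gram_Schmidt_step[OF po]) (simp add: sp)
  hence "r = 0" by (simp add: orthogonal_def)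
  moreover have "\<And>b. b \<in> B \<Longrightarrow> b \<bullet> b = 1" using n by (metis power2_norm_eq_inner power_one)
  ultimately have ea: "a = (\<Sum>b\<in>B. (b \<bullet> a) *\<^sub>R b)" unfolding r_def by simp
  have "(norm a)\<^sup>2 = a \<bullet> a" by (simp add: power2_norm_eq_inner)
  also have "\<dots> = a \<bullet> (\<Sum>b\<in>B. (b \<bullet> a) *\<^sub>R b)" using ea by simp
  also have "\<dots> = (\<Sum>b\<in>B. (a \<bullet> b)\<^sup>2)"
    by (simp add: inner_sum_right power2_eq_square inner_commute)
  finally show ?thesis .
qed

lemma main_bound:
  fixes \<mu> z p e :: "'a::euclidean_space"
  assumes n: "\<forall>b\<in>B. norm b = 1" and po: "pairwise orthogonal B" and c: "card B = DIM('a)"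
    and eB: "e \<in> B" and zp: "z - p = norm (z - p) *\<^sub>R e" and znp: "z \<noteq> p"
    and s: "0 < \<sigma>" and c1: "c1 > 0"
    and h1: "\<bar>norm (z - p) - (\<mu> - p) \<bullet> e\<bar> \<ge> c1 * \<sigma>"
    and h2: "\<forall>b\<in>B - {e}. \<bar>(\<mu> - p) \<bullet> b\<bar> \<le> K" and Kn: "K \<ge> 0"
  shows "sin (vec_angle (\<mu> - z) (p - z)) \<le> (sqrt (real DIM('a)) * K / c1) / \<sigma> "
proof -
  define v where "v = \<mu> - z"
  define \<Delta> where "\<Delta> = norm (z - p)"
  have fin: "finite B" using po pairwise_orthogonal_imp_finite by blast
  have Dp: "\<Delta> > 0" using znp by (simp add: \<Delta>_def)
  have ee: "e \<bullet> e = 1" using n eB by (metis power2_norm_eq_inner power_one)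
  have ve: "v \<bullet> e = (\<mu> - p) \<bullet> e - \<Delta>"
  proof -
    have "v = (\<mu> - p) - \<Delta> *\<^sub>R e" using zp unfolding v_def \<Delta>_def
      by (metis diff_diff_eq2 diff_add_cancel add_diff_cancel_left')
    thus ?thesis using ee by (simp add: inner_diff_left)
  qed
  have vb: "v \<bullet> b = (\<mu> - p) \<bullet> b" if "b \<in> B - {e}" for b
  proof -
    have "e \<bullet> b = 0" using po eB that by (auto simp: pairwise_def orthogonal_def)
    moreover have "v = (\<mu> - p) - \<Delta> *\<^sub>R e" using zp unfolding v_def \<Delta>_def
      by (metis diff_diff_eq2 diff_add_cancel add_diff_cancel_left')
    ultimately show ?thesis by (simp add: inner_diff_left)
  qed
  define S where "S = (\<Sum>b\<in>B - {e}. (v \<bullet> b)\<^sup>2)"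
  have nv: "(norm v)\<^sup>2 = (v \<bullet> e)\<^sup>2 + S"
    using parseval_aux[OF n po c, of v] fin eB unfolding S_def
    by (simp add: sum.remove)
  have S0: "S \<ge> 0" unfolding S_def by (simp add: sum_nonneg)
  have K0: "S \<le> real (card (B - {e})) * K\<^sup>2"
  proof -
    have "S \<le> (\<Sum>b\<in>B - {e}. K\<^sup>2)" unfolding S_def
    proof (rule sum_mono)
      fix b assume b: "b \<in> B - {e}"
      have "\<bar>v \<bullet> b\<bar> \<le> K" using h2 b vb by auto
      thus "(v \<bullet> b)\<^sup>2 \<le> K\<^sup>2" by (metis abs_ge_zero power2_abs power_mono)
    qed
    thus ?thesis by simp
  qed
  have cardle: "real (card (B - {e})) \<le> real DIM('a)" using c fin
    by (simp add: card_Diff_subset_Int) 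
  have SD: "S \<le> real DIM('a) * K\<^sup>2"
    using K0 cardle by (meson mult_right_mono order_trans zero_le_power2)
  have vel: "\<bar>v \<bullet> e\<bar> \<ge> c1 * \<sigma>" using h1 ve unfolding \<Delta>_def by linarith
  have cs: "c1 * \<sigma> > 0" using c1 s by simp
  have nvpos: "norm v \<ge> c1 * \<sigma>"
  proof -
    have "(v \<bullet> e)\<^sup>2 \<le> (norm v)\<^sup>2" using nv S0 by simp
    hence "\<bar>v \<bullet> e\<bar> \<le> norm v" by (metis power2_abs norm_ge_zero power2_le_imp_le)
    thus ?thesis using vel by simp
  qed
  have pz: "p - z = (- \<Delta>) *\<^sub>R e" using zp unfolding \<Delta>_def by (metis minus_diff_eq scaleR_minus_left)
  have npz: "norm (p - z) = \<Delta>" unfolding \<Delta>_def by (simp add: norm_minus_commute)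
  define t where "t = (v \<bullet> (p - z)) / (norm v * norm (p - z))"
  have t: "t = - (v \<bullet> e) / norm v"
    unfolding t_def npz using Dp by (simp add: pz)
  have nvp: "norm v > 0" using nvpos cs by linarith
  have t2: "1 - t\<^sup>2 = S / (norm v)\<^sup>2"
    proof -
    have np: "(norm v)\<^sup>2 > 0" using nvp by simp
    have "t\<^sup>2 = (v \<bullet> e)\<^sup>2 / (norm v)\<^sup>2" unfolding t by (simp add: power_divide)
    hence "1 - t\<^sup>2 = ((norm v)\<^sup>2 - (v \<bullet> e)\<^sup>2) / (norm v)\<^sup>2" using np by (simp add: diff_divide_distrib)
    thus ?thesis using nv by simp
  qed
  have tb: "-1 \<le> t \<and> t \<le> 1"
  proof -
    have "t\<^sup>2 \<le> 1" using t2 S0 nvp by (smt (verit) divide_nonneg_pos zero_less_power)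
    hence "\<bar>t\<bar> \<le> 1" by (simp add: abs_square_le_1)
    thus ?thesis by linarith
  qed
  have "sin (vec_angle v (p - z)) = sqrt (1 - t\<^sup>2)"
    unfolding vec_angle_def t_def[symmetric] using tb sin_arccos by blast
  also have "\<dots> = sqrt S / norm v" using t2 nvp by (simp add: real_sqrt_divide)
  also have "\<dots> \<le> sqrt (real DIM('a) * K\<^sup>2) / (c1 * \<sigma>)"
    by (rule frac_le) (use SD nvpos cs in auto)
  also have "\<dots> = sqrt (real DIM('a)) * \<bar>K\<bar> / (c1 * \<sigma>)" by (simp add: real_sqrt_mult)
  finally have "sin (vec_angle v (p - z)) \<le> sqrt (real DIM('a)) * \<bar>K\<bar> / (c1 * \<sigma>)" .
  thus ?thesis using Kn by (simp add: v_def)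
qed

theorem proposition3p2:
  fixes M :: "'a::euclidean_space set"
    and PX :: "'a measure"
    and \<tau> c0 c1 c2 Cr :: real
  assumes "compact M" and "M \<noteq> {}"
    and "C2_submanifold TYPE('d::euclidean_space) M"
    and "\<tau> > 0" and "reach_ge M \<tau>"
    and "prob_space PX" and "sets PX = sets borel" and "emeasure PX M = 1"
    and "c0 > 0" and "c1 > 0" and "c2 > 0" and "Cr > 0"
  shows "\<exists>C>0. \<exists>\<sigma>0>0. \<forall>\<sigma> z p B T e.
     0 < \<sigma> \<and> \<sigma> < \<sigma>0 \<and>
     infdist z M \<le> c0 * \<sigma> \<and>
     p \<in> M \<and> (\<forall>x\<in>M. dist z p \<le> dist z x) \<and> z \<noteq> p \<and>
     (\<forall>b\<in>B. norm b = 1) \<and> pairwise orthogonal B \<and> card B = DIM('a) \<and>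
     T \<subseteq> B \<and> card T = DIM('d) \<and> is_tangent_space TYPE('d) M p (span T) \<and>
     e \<in> B - T \<and> z - p = norm (z - p) *\<^sub>R e \<and>
     (let \<mu> = cond_mean (noisy_law PX \<sigma>) (ball z (Cr * \<sigma>)) in
        \<bar>norm (z - p) - (\<mu> - p) \<bullet> e\<bar> \<ge> c1 * \<sigma> \<and>
        (\<forall>b\<in>B - {e}. \<bar>(\<mu> - p) \<bullet> b\<bar> \<le> c2 * \<sigma>\<^sup>2 * sqrt (ln (1 / \<sigma>))))
     \<longrightarrow> sin (vec_angle (cond_mean (noisy_law PX \<sigma>) (ball z (Cr * \<sigma>)) - z) (p - z))
           \<le> C * \<sigma> * sqrt (ln (1 / \<sigma>))"
proof (rule exI[of _ "sqrt (real DIM('a)) * c2 / c1"], rule conjI, goal_cases)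
  case 2
  show ?case
  proof (rule exI[of _ 1], rule conjI, simp, intro allI impI)
  fix \<sigma> z p B T e
  assume H: "0 < \<sigma> \<and> \<sigma> < 1 \<and>
     infdist z M \<le> c0 * \<sigma> \<and>
     p \<in> M \<and> (\<forall>x\<in>M. dist z p \<le> dist z x) \<and> z \<noteq> p \<and>
     (\<forall>b\<in>B. norm b = 1) \<and> pairwise orthogonal B \<and> card B = DIM('a) \<and>
     T \<subseteq> B \<and> card T = DIM('d) \<and> is_tangent_space TYPE('d) M p (span T) \<and>
     e \<in> B - T \<and> z - p = norm (z - p) *\<^sub>R e \<and>
     (let \<mu> = cond_mean (noisy_law PX \<sigma>) (ball z (Cr * \<sigma>)) in
        \<bar>norm (z - p) - (\<mu> - p) \<bullet> e\<bar> \<ge> c1 * \<sigma> \<and>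
        (\<forall>b\<in>B - {e}. \<bar>(\<mu> - p) \<bullet> b\<bar> \<le> c2 * \<sigma>\<^sup>2 * sqrt (ln (1 / \<sigma>))))"
  define \<mu> where "\<mu> = cond_mean (noisy_law PX \<sigma>) (ball z (Cr * \<sigma>))"
  define K where "K = c2 * \<sigma>\<^sup>2 * sqrt (ln (1 / \<sigma>))"
  have s: "0 < \<sigma>" "\<sigma> < 1" using H by auto
  have "ln (1 / \<sigma>) > 0" using s by simp
  hence K0: "K \<ge> 0" unfolding K_def using assms s by simp
  have h: "\<bar>norm (z - p) - (\<mu> - p) \<bullet> e\<bar> \<ge> c1 * \<sigma>" "\<forall>b\<in>B - {e}. \<bar>(\<mu> - p) \<bullet> b\<bar> \<le> K"
    using H unfolding \<mu>_def K_def Let_def by auto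
  have "sin (vec_angle (\<mu> - z) (p - z)) \<le> (sqrt (real DIM('a)) * K / c1) / \<sigma>"
    by (rule main_bound[of B e z p \<sigma> c1 \<mu> K]) (use H h K0 assms in auto)
  also have "\<dots> = sqrt (real DIM('a)) * c2 / c1 * \<sigma> * sqrt (ln (1 / \<sigma>))"
    unfolding K_def using s assms by (simp add: power2_eq_square field_simps)
  finally show "sin (vec_angle (cond_mean (noisy_law PX \<sigma>) (ball z (Cr * \<sigma>)) - z) (p - z))
           \<le> sqrt (real DIM('a)) * c2 / c1 * \<sigma> * sqrt (ln (1 / \<sigma>))" unfolding \<mu>_def .
qed
next
  case 1
  show ?case using assms by simp
qed

end
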